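(* Let $\lambda_0\in\mathfrak h^*_{\mathbb R}$ lie on exactly one $A_2$ vanishing line $P(n_0,\alpha_0)$. Then, with $f$ defined on all of $\mathfrak h^*_{\mathbb R}$ by the formula below, the coefficientwise limits exist and $$\lim_{\epsilon\to0^+}f(\lambda_0+\epsilon\alpha_0)-\lim_{\epsilon\to0^-}f(\lambda_0+\epsilon\alpha_0)=2\,e(\lambda_0)\,x^{n_0\alpha_0}f(\lambda_0-n_0\alpha_0),$$ where $e(\lambda_0)=+1$ if $\alpha_0\in\{\alpha_1,\alpha_2\}$, $e(\lambda_0)=+1$ if $\alpha_0=\alpha_3$ and $\lambda_0+\rho\notin C$, and $e(\lambda_0)=-1$ if $\alpha_0=\alpha_3$ and $\lambda_0+\rho\in C$.
   Context: $\mathfrak g=A_2$ ($\mathfrak{sl}_3$) with simple roots $\alpha_1,\alpha_2$, $(\alpha_1,\alpha_1)=(\alpha_2,\alpha_2)=2$, $(\alpha_1,\alpha_2)=-1$, $\alpha_3=\alpha_1+\alpha_2$, $\Delta_+=\{\alpha_1,\alpha_2,\alpha_3\}$, $\rho=\alpha_3$. $\mathfrak h^*_{\mathbb R}$ is the real span of $\alpha_1,\alpha_2$. The vanishing lines are $P(n,\alpha)=\{\lambda:(\alpha,\lambda+\rho)=n\}$, $n\in\mathbb Z_{\ge1}$, $\alpha\in\Delta_+$. $C=\{\lambda\in\mathfrak h^*_{\mathbb R}:(\alpha_1,\lambda)\ge0,(\alpha_2,\lambda)\ge0\}$. Monomials: $x^{\alpha_1}=x_1$, $x^{\alpha_2}=x_2$,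 $x^{\alpha_3}=x_1x_2$, $x^{n\alpha}=(x^\alpha)^n$. For $\lambda\in\mathfrak h^*_{\mathbb R}$ put $a_i=a_i(\lambda)=\max(0,\lfloor(\alpha_i,\lambda+\rho)\rfloor)$, $i=1,2,3$, and define $f(\lambda)=\tilde f(a_1,a_2,a_3)/D$ where $D=(1-x_1^2)(1-x_2^2)(1-x_1^2x_2^2)$ and $\tilde f(a_1,a_2,a_3)=(1+x_1)(1+x_2)(1+x_1x_2)-2x_1^{a_1+1}(1+x_2)(1+x_1x_2)-2x_2^{a_2+1}(1+x_1)(1+x_1x_2)-2(x_1x_2)^{a_3+1}(1+x_1)(1+x_2)+4x_1^{a_1+1}(x_1x_2)^{\min(a_2,a_3)+1}(1+x_2)+4x_2^{a_2+1}(x_1x_2)^{\min(a_1,a_3)+1}(1+x_1)+4x_1^{\max(a_1,a_3)+1}x_2^{\max(a_2,a_3)+1}(1+x_1x_2)-8x_1^{\min(a_2,a_3)+a_1+2}x_2^{\min(a_1,a_3)+a_2+2}$. *)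

theory Defs
  imports "HOL-Analysis.Analysis"
begin

text \<open>Points of h*_R are represented by coordinates (c1,c2) w.r.t. the basis alpha1, alpha2:
  the pair (c1,c2) stands for c1*alpha1 + c2*alpha2.\<close>

definition ip :: "real \<times> real \<Rightarrow> real \<times> real \<Rightarrow> real" where
  "ip u v = 2 * fst u * fst v - fst u * snd v - snd u * fst v + 2 * snd u * snd v"

datatype root = A1 | A2 | A3

fun rvec :: "root \<Rightarrow> real \<times> real" where
  "rvec A1 = (1, 0)" | "rvec A2 = (0, 1)" | "rvec A3 = (1, 1)"

definition rho :: "real \<times> real" where "rho = (1, 1)"

definition vline :: "nat \<Rightarrow> root \<Rightarrow> (real \<times> real) set" where
  "vline n a = {lam. ip (rvec a) (lam + rho) = real n}"

definition coneC :: "(real \<times> real) set" where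
  "coneC = {lam. ip (rvec A1) lam \<ge> 0 \<and> ip (rvec A2) lam \<ge> 0}"

text \<open>Formal power series in x1, x2 with integer coefficients: coefficient of x1^i x2^j.\<close>
type_synonym ps2 = "nat \<Rightarrow> nat \<Rightarrow> int"

definition mon :: "nat \<Rightarrow> nat \<Rightarrow> ps2" where
  "mon p q = (\<lambda>i j. if i = p \<and> j = q then 1 else 0)"

definition padd :: "ps2 \<Rightarrow> ps2 \<Rightarrow> ps2" where
  "padd f g = (\<lambda>i j. f i j + g i j)"

definition psc :: "int \<Rightarrow> ps2 \<Rightarrow> ps2" where
  "psc c f = (\<lambda>i j. c * f i j)"

definition pmul :: "ps2 \<Rightarrow> ps2 \<Rightarrow> ps2" where
  "pmul f g = (\<lambda>i j. \<Sum>a\<le>i. \<Sum>b\<le>j. f a b * g (i - a) (j - b))"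

text \<open>Division in Z[[x1,x2]] (the quotient is unique when the divisor has constant term 1).\<close>
definition pdiv :: "ps2 \<Rightarrow> ps2 \<Rightarrow> ps2" where
  "pdiv f d = (THE g. pmul g d = f)"

fun xroot :: "nat \<Rightarrow> root \<Rightarrow> ps2" where
  "xroot n A1 = mon n 0" | "xroot n A2 = mon 0 n" | "xroot n A3 = mon n n"

definition onep :: ps2 where "onep = mon 0 0"
definition Q1 :: ps2 where "Q1 = padd onep (mon 1 0)"
definition Q2 :: ps2 where "Q2 = padd onep (mon 0 1)"
definition Q3 :: ps2 where "Q3 = padd onep (mon 1 1)"

definition Dps :: ps2 where
  "Dps = pmul (pmul (padd onep (psc (-1) (mon 2 0))) (padd onep (psc (-1) (mon 0 2))))
              (padd onep (psc (-1) (mon 2 2)))"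

definition ftil :: "nat \<Rightarrow> nat \<Rightarrow> nat \<Rightarrow> ps2" where
  "ftil a1 a2 a3 =
     padd (pmul (pmul Q1 Q2) Q3)
    (padd (psc (-2) (pmul (pmul (mon (a1+1) 0) Q2) Q3))
    (padd (psc (-2) (pmul (pmul (mon 0 (a2+1)) Q1) Q3))
    (padd (psc (-2) (pmul (pmul (mon (a3+1) (a3+1)) Q1) Q2))
    (padd (psc 4 (pmul (pmul (mon (a1+1) 0) (mon (min a2 a3 + 1) (min a2 a3 + 1))) Q2))
    (padd (psc 4 (pmul (pmul (mon 0 (a2+1)) (mon (min a1 a3 + 1) (min a1 a3 + 1))) Q1))
    (padd (psc 4 (pmul (mon (max a1 a3 + 1) (max a2 a3 + 1)) Q3))
          (psc (-8) (mon (min a2 a3 + a1 + 2) (min a1 a3 + a2 + 2)))))))))"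

definition acoef :: "root \<Rightarrow> real \<times> real \<Rightarrow> nat" where
  "acoef a lam = nat (max 0 \<lfloor>ip (rvec a) (lam + rho)\<rfloor>)"

definition fA :: "real \<times> real \<Rightarrow> ps2" where
  "fA lam = pdiv (ftil (acoef A1 lam) (acoef A2 lam) (acoef A3 lam)) Dps"

definition esign :: "real \<times> real \<Rightarrow> root \<Rightarrow> int" where
  "esign lam a = (if a = A3 \<and> lam + rho \<in> coneC then -1 else 1)"

end

theory Submission imports Defs "HOL-Computational_Algebra.Formal_Power_Series"
begin

definition toF :: "ps2 \<Rightarrow> int fps fps" where
  "toF f = Abs_fps (\<lambda>j. Abs_fps (\<lambda>i. f i j))"

definition fromF :: "int fps fps \<Rightarrow> ps2" where
  "fromF A = (\<lambda>i j. fps_nth (fps_nth A j) i)"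

lemma toF_nth: "fps_nth (fps_nth (toF f) j) i = f i j"
  by (simp add: toF_def)

lemma toF_fromF: "toF (fromF A) = A"
  by (intro fps_ext) (simp add: toF_def fromF_def)

lemma toF_inj: "toF f = toF g \<Longrightarrow> f = g"
  by (metis toF_nth ext)

lemma toF_padd: "toF (padd f g) = toF f + toF g"
  by (intro fps_ext) (simp add: toF_def padd_def)

lemma toF_psc: "toF (psc c f) = of_int c * toF f"
  by (intro fps_ext) (simp add: toF_def psc_def flip: fps_of_int)

lemma toF_mon: "toF (mon p q) = fps_const (fps_X ^ p) * fps_X ^ q"
  by (intro fps_ext) (auto simp add: toF_def mon_def)

lemma toF_pmul: "toF (pmul f g) = toF f * toF g"
proof (intro fps_ext)
  fix j i
  have "fps_nth (fps_nth (toF f * toF g) j) i = (\<Sum>b=0..j. \<Sum>a=0..i. f a b * g (i - a) (j - b))"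
    by (simp add: fps_mult_nth fps_sum_nth toF_nth)
  also have "\<dots> = (\<Sum>a\<le>i. \<Sum>b\<le>j. f a b * g (i - a) (j - b))"
    by (simp add: atLeast0AtMost sum.swap[of _ "{..j}"])
  finally show "fps_nth (fps_nth (toF (pmul f g)) j) i = fps_nth (fps_nth (toF f * toF g) j) i"
    by (simp add: toF_def pmul_def)
qed

lemma toF_Dps0: "fps_nth (fps_nth (toF Dps) 0) 0 = 1"
  by (simp add: toF_nth Dps_def pmul_def padd_def psc_def onep_def mon_def)

lemma toF_Dps_unit: "\<exists>U. toF Dps * U = 1"
proof -
  have "fps_nth (toF Dps) 0 * fps_right_inverse (fps_nth (toF Dps) 0) 1 = 1"
    by (rule fps_right_inverse) (simp add: toF_Dps0)
  then show ?thesis using fps_right_inverse by blast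
qed

definition Uinv :: "int fps fps" where "Uinv = (SOME U. toF Dps * U = 1)"

lemma Uinv: "toF Dps * Uinv = 1"
  unfolding Uinv_def using toF_Dps_unit by (rule someI_ex)

lemma toF_pdiv: "toF (pdiv f Dps) = toF f * Uinv"
proof -
  define g where "g = fromF (toF f * Uinv)"
  have g: "toF g = toF f * Uinv" by (simp add: g_def toF_fromF)
  have eq: "pmul g Dps = f"
    by (rule toF_inj) (simp add: toF_pmul g mult.assoc Uinv mult.commute[of Uinv])
  have "pdiv f Dps = g"
    unfolding pdiv_def
  proof (rule the_equality[where P="\<lambda>h. pmul h Dps = f", OF eq])
    fix h assume "pmul h Dps = f"
    then have "toF h * toF Dps = toF g * toF Dps" using eq by (metis toF_pmul)
    moreover have "toF Dps \<noteq> 0" using Uinv by auto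
    ultimately show "h = g" by (simp add: toF_inj)
  qed
  then show ?thesis using g by simp
qed

definition ftilR :: "'a::comm_ring_1 \<Rightarrow> 'a \<Rightarrow> nat \<Rightarrow> nat \<Rightarrow> nat \<Rightarrow> 'a" where
  "ftilR x y a1 a2 a3 = (1+x)*(1+y)*(1+x*y) - 2*x^(a1+1)*(1+y)*(1+x*y) - 2*y^(a2+1)*(1+x)*(1+x*y)
    - 2*(x*y)^(a3+1)*(1+x)*(1+y) + 4*x^(a1+1)*(x*y)^(min a2 a3+1)*(1+y)
    + 4*y^(a2+1)*(x*y)^(min a1 a3+1)*(1+x) + 4*x^(max a1 a3+1)*y^(max a2 a3+1)*(1+x*y)
    - 8*x^(min a2 a3+a1+2)*y^(min a1 a3+a2+2)"

lemma ftilR_sym: "ftilR x y a1 a2 a3 = ftilR y x a2 a1 a3"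
  unfolding ftilR_def by (simp add: algebra_simps min.commute max.commute)

lemma I1a: "ftilR x y (m+1) p (m+1+p) - ftilR x y m p (m+1+p) = 2 * x^(m+1) * ftilR x y 0 (m+1+p) p"
  unfolding ftilR_def by (simp add: power_add power_mult_distrib algebra_simps)

lemma I1b: "ftilR x y (q+r+1) 0 q - ftilR x y (q+r) 0 q = 2 * x^(q+r+1) * ftilR x y 0 q 0"
  unfolding ftilR_def by (simp add: power_add power_mult_distrib algebra_simps)

lemma I3a: "ftilR x y p r (p+r+1) - ftilR x y p r (p+r) = - 2 * (x*y)^(p+r+1) * ftilR x y 0 0 0"
  unfolding ftilR_def by (simp add: power_add power_mult_distrib algebra_simps)

lemma I3b: "ftilR x y (m+1+p) 0 (m+1) - ftilR x y (m+1+p) 0 m = 2 * (x*y)^(m+1) * ftilR x y p 0 0"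
  unfolding ftilR_def by (simp add: power_add power_mult_distrib algebra_simps)


definition X1 :: "int fps fps" where "X1 = fps_const fps_X"
definition X2 :: "int fps fps" where "X2 = fps_X"

lemma toF_mon': "toF (mon p q) = X1 ^ p * X2 ^ q"
  by (simp add: toF_mon X1_def X2_def fps_const_power)

lemma toF_ftil: "toF (ftil a1 a2 a3) = ftilR X1 X2 a1 a2 a3"
  unfolding ftil_def ftilR_def Q1_def Q2_def Q3_def onep_def
  by (simp add: toF_padd toF_pmul toF_psc toF_mon' power_mult_distrib algebra_simps)


lemma J1:
  assumes "n \<ge> 1"
  shows "ftilR x y n (nat (max 0 k)) (nat (max 0 (int n + k))) - ftilR x y (n-1) (nat (max 0 k)) (nat (max 0 (int n + k)))
     = 2 * x^n * ftilR x y 0 (nat (max 0 (int n + k))) (nat (max 0 k))"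
proof (cases "k \<ge> 0")
  case True
  obtain p where p: "k = int p" using True nonneg_int_cases by blast
  obtain m where m: "n = m + 1" using assms by (cases n) auto
  have e: "nat (max 0 (int n + k)) = m + 1 + p" "nat (max 0 k) = p" "n - 1 = m" using p m by auto
  show ?thesis unfolding e using I1a[of x y m p] unfolding m[symmetric] .
next
  case False
  define q where "q = nat (max 0 (int n + k))"
  have q: "q \<le> n - 1" using False assms unfolding q_def by linarith
  define r where "r = n - 1 - q"
  have n: "n = q + r + 1" using q assms unfolding r_def by linarith
  have k0: "nat (max 0 k) = 0" using False by simp
  have n1: "n - 1 = q + r" using n by simp
  show ?thesis unfolding q_def[symmetric] k0 n1 using I1b[of x y q r] unfolding n[symmetric] .
qed


lemma J3:
  assumes "n \<ge> 1"
  shows "ftilR x y (nat (max 0 k)) (nat (max 0 (int n - k - 1))) n - ftilR x y (nat (max 0 k)) (nat (max 0 (int n - k - 1))) (n-1)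
     = of_int (2 * (if 0 \<le> k \<and> k \<le> int n - 1 then -1 else 1)) * (x*y)^n * ftilR x y (nat (max 0 (k - int n))) (nat (max 0 (- k - 1))) 0"
proof -
  obtain m where m: "n = m + 1" using assms by (cases n) auto
  consider (a) "0 \<le> k \<and> k \<le> int n - 1" | (b) "k \<ge> int n" | (c) "k < 0" by linarith
  then show ?thesis
  proof cases
    case a
    obtain p where p: "k = int p" using a nonneg_int_cases by blast
    define r where "r = n - 1 - p"
    have n: "n = p + r + 1" using a p assms unfolding r_def by linarith
    have e: "nat (max 0 (int n - k - 1)) = r" "nat (max 0 (k - int n)) = 0" "nat (max 0 (- k - 1)) = 0"
       "nat (max 0 k) = p" "n - 1 = p + r" 
       "(of_int (2 * (if 0 \<le> k \<and> k \<le> int n - 1 then -1 else 1)) :: 'a) = - 2"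
      using a n p by auto
    show ?thesis unfolding e using I3a[of x y p r] unfolding n[symmetric] .
  next
    case b
    define p where "p = nat (k - int n)"
    have p: "k = int n + int p" using b unfolding p_def by simp
    have e: "nat (max 0 k) = m+1+p" "nat (max 0 (int n - k - 1)) = 0" "nat (max 0 (k - int n)) = p"
        "nat (max 0 (- k - 1)) = 0" "n - 1 = m"
       "(of_int (2 * (if 0 \<le> k \<and> k \<le> int n - 1 then -1 else 1)) :: 'a) = 2"
      using p m b by auto
    show ?thesis unfolding e using I3b[of x y m p] unfolding m[symmetric] .
  next
    case c
    define p where "p = nat (- k - 1)"
    have p: "k = - 1 - int p" using c unfolding p_def by simp
    have e: "nat (max 0 k) = 0" "nat (max 0 (int n - k - 1)) = m+1+p" "nat (max 0 (k - int n)) = 0"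
        "nat (max 0 (- k - 1)) = p" "n - 1 = m"
       "(of_int (2 * (if 0 \<le> k \<and> k \<le> int n - 1 then -1 else 1)) :: 'a) = 2"
      using p m c by auto
    have "ftilR y x (m + 1 + p) 0 (m + 1) - ftilR y x (m + 1 + p) 0 m = 2 * (y * x) ^ (m + 1) * ftilR y x p 0 0"
      by (rule I3b)
    then show ?thesis unfolding e m[symmetric]
      by (simp only: ftilR_sym[of x y 0] ftilR_sym[of x y p] mult.commute[of y x])
  qed
qed


lemma toF_diff: "toF (\<lambda>i j. f i j - g i j) = toF f - toF g"
  by (intro fps_ext) (simp add: toF_def)

lemma ip_shift: "ip (rvec a) (lam + e *\<^sub>R rvec b + rho) = ip (rvec a) (lam + rho) + e * ip (rvec a) (rvec b)"
  by (cases lam; cases a; cases b) (simp_all add: ip_def rho_def algebra_simps)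

lemma ip_shift2: "ip (rvec a) (lam - e *\<^sub>R rvec b + rho) = ip (rvec a) (lam + rho) - e * ip (rvec a) (rvec b)"
  by (cases lam; cases a; cases b) (simp_all add: ip_def rho_def algebra_simps)

lemma L1core:
  fixes t c :: real
  assumes "real_of_int \<lfloor>t\<rfloor> = t \<Longrightarrow> t \<le> 0" "\<bar>c\<bar> \<le> 1"
  shows "\<exists>d>0. \<forall>e. \<bar>e\<bar> < d \<longrightarrow> nat (max 0 \<lfloor>t + e*c\<rfloor>) = nat (max 0 \<lfloor>t\<rfloor>)"
proof (cases "real_of_int \<lfloor>t\<rfloor> = t")
  case True
  then have t0: "t \<le> 0" using assms by blast
  show ?thesis
  proof (intro exI[of _ 1] conjI allI impI)
    fix e :: real assume "\<bar>e\<bar> < 1"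
    then have "\<bar>e*c\<bar> < 1" proof -
      have "\<bar>e\<bar>*\<bar>c\<bar> \<le> \<bar>e\<bar>" by (rule mult_left_le) (simp_all add: assms)
      then show ?thesis using \<open>\<bar>e\<bar> < _\<close> by (simp add: abs_mult)
    qed
    then have "t + e*c < 1" using t0 by linarith
    then have "\<lfloor>t + e*c\<rfloor> \<le> 0" by (simp add: floor_le_iff)
    moreover have "\<lfloor>t\<rfloor> \<le> 0" using t0 by (simp add: floor_le_iff)
    ultimately show "nat (max 0 \<lfloor>t + e*c\<rfloor>) = nat (max 0 \<lfloor>t\<rfloor>)" by simp
  qed simp
next
  case False
  have lo: "real_of_int \<lfloor>t\<rfloor> < t" using False of_int_floor_le[of t] by linarith
  have hi: "t < real_of_int \<lfloor>t\<rfloor> + 1" by simp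
  define d where "d = min (t - real_of_int \<lfloor>t\<rfloor>) (real_of_int \<lfloor>t\<rfloor> + 1 - t)"
  show ?thesis
  proof (intro exI[of _ d] conjI allI impI)
    show "d > 0" using lo hi unfolding d_def by simp
    fix e :: real assume "\<bar>e\<bar> < d"
    then have "\<bar>e*c\<bar> < d" proof -
      have "\<bar>e\<bar>*\<bar>c\<bar> \<le> \<bar>e\<bar>" by (rule mult_left_le) (simp_all add: assms)
      then show ?thesis using \<open>\<bar>e\<bar> < _\<close> by (simp add: abs_mult)
    qed
    then have "\<lfloor>t + e*c\<rfloor> = \<lfloor>t\<rfloor>" unfolding d_def by (simp add: floor_eq_iff abs_less_iff)
    then show "nat (max 0 \<lfloor>t + e*c\<rfloor>) = nat (max 0 \<lfloor>t\<rfloor>)" by simp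
  qed
qed

lemma ev_right: "\<exists>d>0. \<forall>e. \<bar>e\<bar> < d \<longrightarrow> P e \<Longrightarrow> eventually P (at_right (0::real))"
  unfolding eventually_at_right_field
proof -
  assume "\<exists>d>0. \<forall>e. \<bar>e\<bar> < d \<longrightarrow> P e"
  then obtain d where d: "d > 0" "\<And>e. \<bar>e\<bar> < d \<Longrightarrow> P e" by blast
  show "\<exists>b>0. \<forall>y>0. y < b \<longrightarrow> P y" using d by (intro exI[of _ d]) auto
qed

lemma ev_left: "\<exists>d>0. \<forall>e. \<bar>e\<bar> < d \<longrightarrow> P e \<Longrightarrow> eventually P (at_left (0::real))"
  unfolding eventually_at_left_field
proof -
  assume "\<exists>d>0. \<forall>e. \<bar>e\<bar> < d \<longrightarrow> P e"
  then obtain d where d: "d > 0" "\<And>e. \<bar>e\<bar> < d \<Longrightarrow> P e" by blast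
  show "\<exists>b<0. \<forall>y>b. y < 0 \<longrightarrow> P y" using d by (intro exI[of _ "-d"]) auto
qed

lemma L2r: "eventually (\<lambda>e. nat (max 0 \<lfloor>real n + e*2\<rfloor>) = n) (at_right (0::real))"
proof -
  have "\<forall>e>(0::real). e < 1/2 \<longrightarrow> nat (max 0 \<lfloor>real n + e*2\<rfloor>) = n"
  proof (intro allI impI)
    fix e :: real assume "e > 0" "e < 1/2"
    then have "\<lfloor>e*2\<rfloor> = 0" by (simp add: floor_eq_iff)
    then show "nat (max 0 \<lfloor>real n + e*2\<rfloor>) = n" by simp
  qed
  then show ?thesis unfolding eventually_at_right_field by (intro exI[of _ "1/2"]) auto
qed

lemma L2l: "n \<ge> 1 \<Longrightarrow> eventually (\<lambda>e. nat (max 0 \<lfloor>real n + e*2\<rfloor>) = n - 1) (at_left (0::real))"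
proof -
  assume n: "n \<ge> 1"
  have "\<forall>e>(-1/2::real). e < 0 \<longrightarrow> \<lfloor>real n + e*2\<rfloor> = int n - 1"
    by (auto simp: floor_eq_iff)
  then show ?thesis unfolding eventually_at_left_field
    by (intro exI[of _ "-1/2"]) (use n in auto)
qed

lemma assemble:
  assumes R: "eventually (\<lambda>e. acoef A1 (lam0 + e *\<^sub>R r) = p1 \<and> acoef A2 (lam0 + e *\<^sub>R r) = p2 \<and> acoef A3 (lam0 + e *\<^sub>R r) = p3) (at_right 0)"
    and L: "eventually (\<lambda>e. acoef A1 (lam0 + e *\<^sub>R r) = q1 \<and> acoef A2 (lam0 + e *\<^sub>R r) = q2 \<and> acoef A3 (lam0 + e *\<^sub>R r) = q3) (at_left 0)"
    and S: "acoef A1 lam' = s1" "acoef A2 lam' = s2" "acoef A3 lam' = s3"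
    and I: "ftilR X1 X2 p1 p2 p3 - ftilR X1 X2 q1 q2 q3 = of_int c * toF xr * ftilR X1 X2 s1 s2 s3"
  shows "\<exists>Lp Lm :: ps2.
     (\<forall>i j. ((\<lambda>\<epsilon>. fA (lam0 + \<epsilon> *\<^sub>R r) i j) \<longlongrightarrow> Lp i j) (at_right 0)) \<and>
     (\<forall>i j. ((\<lambda>\<epsilon>. fA (lam0 + \<epsilon> *\<^sub>R r) i j) \<longlongrightarrow> Lm i j) (at_left 0)) \<and>
     (\<lambda>i j. Lp i j - Lm i j) = psc c (pmul xr (fA lam'))"
proof (intro exI conjI allI)
  fix i j
  show "((\<lambda>\<epsilon>. fA (lam0 + \<epsilon> *\<^sub>R r) i j) \<longlongrightarrow> pdiv (ftil p1 p2 p3) Dps i j) (at_right 0)"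
    by (rule tendsto_eventually, rule eventually_mono[OF R]) (simp add: fA_def)
  show "((\<lambda>\<epsilon>. fA (lam0 + \<epsilon> *\<^sub>R r) i j) \<longlongrightarrow> pdiv (ftil q1 q2 q3) Dps i j) (at_left 0)"
    by (rule tendsto_eventually, rule eventually_mono[OF L]) (simp add: fA_def)
next
  show "(\<lambda>i j. pdiv (ftil p1 p2 p3) Dps i j - pdiv (ftil q1 q2 q3) Dps i j) = psc c (pmul xr (fA lam'))"
  proof (rule toF_inj)
    have "toF (\<lambda>i j. pdiv (ftil p1 p2 p3) Dps i j - pdiv (ftil q1 q2 q3) Dps i j)
        = (ftilR X1 X2 p1 p2 p3 - ftilR X1 X2 q1 q2 q3) * Uinv"
      by (simp add: toF_diff toF_pdiv toF_ftil algebra_simps)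
    also have "\<dots> = of_int c * (toF xr * (ftilR X1 X2 s1 s2 s3 * Uinv))"
      unfolding I by (simp add: mult.assoc)
    also have "\<dots> = toF (psc c (pmul xr (fA lam')))"
      by (simp add: toF_psc toF_pmul fA_def S toF_pdiv toF_ftil)
    finally show "toF (\<lambda>i j. pdiv (ftil p1 p2 p3) Dps i j - pdiv (ftil q1 q2 q3) Dps i j) = toF (psc c (pmul xr (fA lam')))" .
  qed
qed


theorem lemma5:
  fixes lam0 :: "real \<times> real" and n0 :: nat and a0 :: root
  assumes "n0 \<ge> 1" and "lam0 \<in> vline n0 a0"
    and "\<forall>n a. n \<ge> 1 \<and> lam0 \<in> vline n a \<longrightarrow> n = n0 \<and> a = a0"
  shows "\<exists>Lp Lm :: ps2.
     (\<forall>i j. ((\<lambda>\<epsilon>. fA (lam0 + \<epsilon> *\<^sub>R rvec a0) i j) \<longlongrightarrow> Lp i j) (at_right 0)) \<and>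
     (\<forall>i j. ((\<lambda>\<epsilon>. fA (lam0 + \<epsilon> *\<^sub>R rvec a0) i j) \<longlongrightarrow> Lm i j) (at_left 0)) \<and>
     (\<lambda>i j. Lp i j - Lm i j) = psc (2 * esign lam0 a0) (pmul (xroot n0 a0) (fA (lam0 - real n0 *\<^sub>R rvec a0)))"
proof -
  define T where "T a = ip (rvec a) (lam0 + rho)" for a
  have t0: "T a0 = real n0" using assms(2) by (simp add: vline_def T_def)
  have oth: "T a \<le> 0" if "a \<noteq> a0" "real_of_int \<lfloor>T a\<rfloor> = T a" for a
  proof (rule ccontr)
    assume "\<not> T a \<le> 0"
    then have "0 < real_of_int \<lfloor>T a\<rfloor>" using that(2) by linarith
    then have "0 < \<lfloor>T a\<rfloor>" by simp
    then have pos: "1 \<le> nat \<lfloor>T a\<rfloor>" by linarith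
    have "real (nat \<lfloor>T a\<rfloor>) = real_of_int \<lfloor>T a\<rfloor>" using pos by simp
    then have "real (nat \<lfloor>T a\<rfloor>) = T a" using that(2) by simp
    then have "lam0 \<in> vline (nat \<lfloor>T a\<rfloor>) a" unfolding vline_def T_def by simp
    then have "a = a0" using assms(3) pos by blast
    then show False using that(1) by simp
  qed
  have T3: "T A3 = T A1 + T A2" by (cases lam0) (simp add: T_def ip_def rho_def)
  have acR: "acoef b (lam0 + e *\<^sub>R rvec a) = nat (max 0 \<lfloor>T b + e * ip (rvec b) (rvec a)\<rfloor>)" for a b e
    by (simp add: acoef_def T_def ip_shift)
  have acS: "acoef b (lam0 - real n0 *\<^sub>R rvec a) = nat (max 0 \<lfloor>T b - real n0 * ip (rvec b) (rvec a)\<rfloor>)" for a b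
    by (simp add: acoef_def T_def ip_shift2)
  have n1: "n0 \<ge> 1" by (rule assms(1))
  show ?thesis
  proof (cases a0)
    case A1
    define k where "k = \<lfloor>T A2\<rfloor>"
    have T1: "T A1 = real n0" using t0 A1 by simp
    have o2: "real_of_int \<lfloor>T A2\<rfloor> = T A2 \<Longrightarrow> T A2 \<le> 0" using oth[of A2] A1 by simp
    have o3: "real_of_int \<lfloor>T A3\<rfloor> = T A3 \<Longrightarrow> T A3 \<le> 0" using oth[of A3] A1 by simp
    have f3: "\<lfloor>T A3\<rfloor> = int n0 + k" unfolding T3 T1 k_def by simp
    have e1: "eventually (\<lambda>e. nat (max 0 \<lfloor>T A1 + e*2\<rfloor>) = n0) (at_right 0)" using L2r T1 by simp
    have e1': "eventually (\<lambda>e. nat (max 0 \<lfloor>T A1 + e*2\<rfloor>) = n0 - 1) (at_left 0)" using L2l[OF n1] T1 by simp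
    have c2: "\<exists>d>0. \<forall>e. \<bar>e\<bar> < d \<longrightarrow> nat (max 0 \<lfloor>T A2 + e*(-1)\<rfloor>) = nat (max 0 k)"
      using L1core[OF o2, of "-1"] k_def by simp
    have c3: "\<exists>d>0. \<forall>e. \<bar>e\<bar> < d \<longrightarrow> nat (max 0 \<lfloor>T A3 + e*1\<rfloor>) = nat (max 0 (int n0 + k))"
      using L1core[OF o3, of "1"] f3 by simp
    have R: "eventually (\<lambda>e. acoef A1 (lam0 + e *\<^sub>R rvec a0) = n0 \<and> acoef A2 (lam0 + e *\<^sub>R rvec a0) = nat (max 0 k)
       \<and> acoef A3 (lam0 + e *\<^sub>R rvec a0) = nat (max 0 (int n0 + k))) (at_right 0)"
      using e1 ev_right[OF c2] ev_right[OF c3] by eventually_elim (unfold acR, simp add: ip_def A1)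
    have L: "eventually (\<lambda>e. acoef A1 (lam0 + e *\<^sub>R rvec a0) = n0 - 1 \<and> acoef A2 (lam0 + e *\<^sub>R rvec a0) = nat (max 0 k)
       \<and> acoef A3 (lam0 + e *\<^sub>R rvec a0) = nat (max 0 (int n0 + k))) (at_left 0)"
      using e1' ev_left[OF c2] ev_left[OF c3] by eventually_elim (unfold acR, simp add: ip_def A1)
    have S: "acoef A1 (lam0 - real n0 *\<^sub>R rvec a0) = 0" "acoef A2 (lam0 - real n0 *\<^sub>R rvec a0) = nat (max 0 (int n0 + k))"
      "acoef A3 (lam0 - real n0 *\<^sub>R rvec a0) = nat (max 0 k)"
      unfolding acS using T1 T3 by (simp_all add: ip_def A1 k_def add.commute)
    have I: "ftilR X1 X2 n0 (nat (max 0 k)) (nat (max 0 (int n0 + k))) - ftilR X1 X2 (n0 - 1) (nat (max 0 k)) (nat (max 0 (int n0 + k)))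
        = of_int (2 * esign lam0 a0) * toF (xroot n0 a0) * ftilR X1 X2 0 (nat (max 0 (int n0 + k))) (nat (max 0 k))"
      using J1[OF n1, of X1 X2 k] by (simp add: esign_def A1 toF_mon')
    show ?thesis by (rule assemble[OF R L S I])
  next
    case A2
    define k where "k = \<lfloor>T A1\<rfloor>"
    have T2: "T A2 = real n0" using t0 A2 by simp
    have o1: "real_of_int \<lfloor>T A1\<rfloor> = T A1 \<Longrightarrow> T A1 \<le> 0" using oth[of A1] A2 by simp
    have o3: "real_of_int \<lfloor>T A3\<rfloor> = T A3 \<Longrightarrow> T A3 \<le> 0" using oth[of A3] A2 by simp
    have f3: "\<lfloor>T A3\<rfloor> = int n0 + k" unfolding T3 T2 k_def by simp
    have e1: "eventually (\<lambda>e. nat (max 0 \<lfloor>T A2 + e*2\<rfloor>) = n0) (at_right 0)" using L2r T2 by simp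
    have e1': "eventually (\<lambda>e. nat (max 0 \<lfloor>T A2 + e*2\<rfloor>) = n0 - 1) (at_left 0)" using L2l[OF n1] T2 by simp
    have c2: "\<exists>d>0. \<forall>e. \<bar>e\<bar> < d \<longrightarrow> nat (max 0 \<lfloor>T A1 + e*(-1)\<rfloor>) = nat (max 0 k)"
      using L1core[OF o1, of "-1"] k_def by simp
    have c3: "\<exists>d>0. \<forall>e. \<bar>e\<bar> < d \<longrightarrow> nat (max 0 \<lfloor>T A3 + e*1\<rfloor>) = nat (max 0 (int n0 + k))"
      using L1core[OF o3, of "1"] f3 by simp
    have R: "eventually (\<lambda>e. acoef A1 (lam0 + e *\<^sub>R rvec a0) = nat (max 0 k) \<and> acoef A2 (lam0 + e *\<^sub>R rvec a0) = n0
       \<and> acoef A3 (lam0 + e *\<^sub>R rvec a0) = nat (max 0 (int n0 + k))) (at_right 0)"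
      using e1 ev_right[OF c2] ev_right[OF c3] by eventually_elim (unfold acR, simp add: ip_def A2)
    have L: "eventually (\<lambda>e. acoef A1 (lam0 + e *\<^sub>R rvec a0) = nat (max 0 k) \<and> acoef A2 (lam0 + e *\<^sub>R rvec a0) = n0 - 1
       \<and> acoef A3 (lam0 + e *\<^sub>R rvec a0) = nat (max 0 (int n0 + k))) (at_left 0)"
      using e1' ev_left[OF c2] ev_left[OF c3] by eventually_elim (unfold acR, simp add: ip_def A2)
    have S: "acoef A1 (lam0 - real n0 *\<^sub>R rvec a0) = nat (max 0 (int n0 + k))" "acoef A2 (lam0 - real n0 *\<^sub>R rvec a0) = 0"
      "acoef A3 (lam0 - real n0 *\<^sub>R rvec a0) = nat (max 0 k)"
      unfolding acS using T2 T3 by (simp_all add: ip_def A2 k_def add.commute)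
    have I: "ftilR X1 X2 (nat (max 0 k)) n0 (nat (max 0 (int n0 + k))) - ftilR X1 X2 (nat (max 0 k)) (n0 - 1) (nat (max 0 (int n0 + k)))
        = of_int (2 * esign lam0 a0) * toF (xroot n0 a0) * ftilR X1 X2 (nat (max 0 (int n0 + k))) 0 (nat (max 0 k))"
      using J1[OF n1, of X2 X1 k] by (simp add: esign_def A2 toF_mon' ftilR_sym[of X2 X1])
    show ?thesis by (rule assemble[OF R L S I])
  next
    case A3
    define k where "k = \<lfloor>T A1\<rfloor>"
    have T3n: "T A3 = real n0" using t0 A3 by simp
    have T2: "T A2 = real n0 - T A1" using T3 T3n by simp
    have o1: "real_of_int \<lfloor>T A1\<rfloor> = T A1 \<Longrightarrow> T A1 \<le> 0" using oth[of A1] A3 by simp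
    have o2: "real_of_int \<lfloor>T A2\<rfloor> = T A2 \<Longrightarrow> T A2 \<le> 0" using oth[of A2] A3 by simp
    have nonint: "real_of_int k \<noteq> T A1"
    proof
      assume h: "real_of_int k = T A1"
      then have "T A1 \<le> 0" using o1 k_def by simp
      moreover have "real_of_int \<lfloor>T A2\<rfloor> = T A2"
      proof -
        have "T A2 = real_of_int (int n0 - k)" using T2 h by simp
        then show ?thesis by (metis floor_of_int)
      qed
      then have "T A2 \<le> 0" using o2 by simp
      ultimately show False using T2 n1 by simp
    qed
    have kle: "real_of_int k \<le> T A1" using k_def by simp
    have klo: "real_of_int k < T A1" using kle nonint by (simp add: less_le)
    have khi: "T A1 < real_of_int k + 1" using k_def by simp
    have f2: "\<lfloor>T A2\<rfloor> = int n0 - k - 1" unfolding T2 using klo khi by (simp add: floor_eq_iff)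
    have e1: "eventually (\<lambda>e. nat (max 0 \<lfloor>T A3 + e*2\<rfloor>) = n0) (at_right 0)" using L2r T3n by simp
    have e1': "eventually (\<lambda>e. nat (max 0 \<lfloor>T A3 + e*2\<rfloor>) = n0 - 1) (at_left 0)" using L2l[OF n1] T3n by simp
    have c1: "\<exists>d>0. \<forall>e. \<bar>e\<bar> < d \<longrightarrow> nat (max 0 \<lfloor>T A1 + e*1\<rfloor>) = nat (max 0 k)"
      using L1core[OF o1, of "1"] k_def by simp
    have c2: "\<exists>d>0. \<forall>e. \<bar>e\<bar> < d \<longrightarrow> nat (max 0 \<lfloor>T A2 + e*1\<rfloor>) = nat (max 0 (int n0 - k - 1))"
      using L1core[OF o2, of "1"] f2 by simp
    have R: "eventually (\<lambda>e. acoef A1 (lam0 + e *\<^sub>R rvec a0) = nat (max 0 k) \<and> acoef A2 (lam0 + e *\<^sub>R rvec a0) = nat (max 0 (int n0 - k - 1))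
       \<and> acoef A3 (lam0 + e *\<^sub>R rvec a0) = n0) (at_right 0)"
      using e1 ev_right[OF c1] ev_right[OF c2] by eventually_elim (unfold acR, simp add: ip_def A3)
    have L: "eventually (\<lambda>e. acoef A1 (lam0 + e *\<^sub>R rvec a0) = nat (max 0 k) \<and> acoef A2 (lam0 + e *\<^sub>R rvec a0) = nat (max 0 (int n0 - k - 1))
       \<and> acoef A3 (lam0 + e *\<^sub>R rvec a0) = n0 - 1) (at_left 0)"
      using e1' ev_left[OF c1] ev_left[OF c2] by eventually_elim (unfold acR, simp add: ip_def A3)
    have s1: "\<lfloor>T A1 - real n0\<rfloor> = k - int n0" using klo khi by (simp add: floor_eq_iff)
    have s2: "\<lfloor>T A2 - real n0\<rfloor> = - k - 1" unfolding T2 using klo khi by (simp add: floor_eq_iff)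
    have S: "acoef A1 (lam0 - real n0 *\<^sub>R rvec a0) = nat (max 0 (k - int n0))"
      "acoef A2 (lam0 - real n0 *\<^sub>R rvec a0) = nat (max 0 (- k - 1))"
      "acoef A3 (lam0 - real n0 *\<^sub>R rvec a0) = 0"
      unfolding acS using s1 s2 T3n by (simp_all add: ip_def A3)
    have cone: "(lam0 + rho \<in> coneC) = (0 \<le> k \<and> k \<le> int n0 - 1)"
    proof -
      have "(lam0 + rho \<in> coneC) = (0 \<le> T A1 \<and> 0 \<le> T A2)" by (simp add: coneC_def T_def)
      also have "\<dots> = (0 \<le> k \<and> k \<le> int n0 - 1)"
      proof -
        have "(0 \<le> T A1) = (0 \<le> k)" using klo khi by linarith
        moreover have "(0 \<le> T A2) = (k \<le> int n0 - 1)"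
        proof -
          have "(k \<le> int n0 - 1) = (real_of_int k \<le> real n0 - 1)" by linarith
          then show ?thesis using T2 klo khi by linarith
        qed
        ultimately show ?thesis by simp
      qed
      finally show ?thesis .
    qed
    have I: "ftilR X1 X2 (nat (max 0 k)) (nat (max 0 (int n0 - k - 1))) n0 - ftilR X1 X2 (nat (max 0 k)) (nat (max 0 (int n0 - k - 1))) (n0 - 1)
        = of_int (2 * esign lam0 a0) * toF (xroot n0 a0) * ftilR X1 X2 (nat (max 0 (k - int n0))) (nat (max 0 (- k - 1))) 0"
      using J3[OF n1, of X1 X2 k] by (simp add: esign_def A3 toF_mon' cone power_mult_distrib)
    show ?thesis by (rule assemble[OF R L S I])
  qed
qed

end
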